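(* Let $r>2$ and $p(z_1,z_2)=1-\frac{z_1+z_2}{r}$. For $(k_1,k_2)\in\mathbb{Z}^2$ let $$c_{k_1,k_2}=\frac{1}{4\pi^2}\int_0^{2\pi}\!\!\int_0^{2\pi}\frac{e^{-i(k_1\theta_1+k_2\theta_2)}}{|p(e^{i\theta_1},e^{i\theta_2})|^2}\,d\theta_1\,d\theta_2$$ be the Fourier coefficients of the spectral density function $1/|p|^2$ on the torus $\mathbb{T}^2$. Then $$c_{k_1,k_2}=\frac{1}{\sqrt{1-\frac{4}{r^2}}}\left(\frac r2-\sqrt{\frac{r^2}{4}-1}\right)^{|k_1|+|k_2|}\quad\text{if } k_1k_2\le 0,$$ and $$c_{k_1,k_2}=\frac{\binom{|k_1|+|k_2|}{|k_1|}}{r^{|k_1|+|k_2|}}\;{}_3F_2\!\left(\begin{matrix}1,\ \frac{|k_1|+|k_2|}{2}+1,\ \frac{|k_1|+|k_2|+1}{2}\\ |k_1|+1,\ |k_2|+1\end{matrix};\frac{4}{r^2}\right)\quad\text{if } k_1k_2>0.$$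
   Context: For $|x|<1$, ${}_3F_2\!\left(\begin{matrix}a,b,c\\ d,e\end{matrix};x\right)=\sum_{n=0}^\infty\frac{(a)_n(b)_n(c)_n}{(d)_n(e)_n}\frac{x^n}{n!}$, where $(q)_0=1$ and $(q)_n=q(q+1)\cdots(q+n-1)$ for $n\ge1$ (Pochhammer symbol). $\mathbb{T}=\{w\in\mathbb{C}:|w|=1\}$. *)

theory Defs
  imports "HOL-Analysis.Analysis"
begin

definition pz :: "real \<Rightarrow> complex \<Rightarrow> complex \<Rightarrow> complex" where
  "pz r z1 z2 = 1 - (z1 + z2) / of_real r"

definition fourier_coeff :: "real \<Rightarrow> int \<Rightarrow> int \<Rightarrow> complex" where
  "fourier_coeff r k1 k2 =
     (1 / (4 * of_real (pi ^ 2))) *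
     integral (cbox (0, 0) (2 * pi, 2 * pi))
       (\<lambda>(t1 :: real, t2 :: real).
          exp (- \<i> * of_real (of_int k1 * t1 + of_int k2 * t2)) /
          of_real ((cmod (pz r (exp (\<i> * of_real t1)) (exp (\<i> * of_real t2)))) ^ 2))"

definition hyp3F2 :: "real \<Rightarrow> real \<Rightarrow> real \<Rightarrow> real \<Rightarrow> real \<Rightarrow> real \<Rightarrow> real" where
  "hyp3F2 a b c d e x =
     (\<Sum>n. pochhammer a n * pochhammer b n * pochhammer c n /
            (pochhammer d n * pochhammer e n) * x ^ n / fact n)"

end

theory Submission
  imports Defs
begin


lemma orth1:
  fixes j :: int
  shows "integral {0..2*pi} (\<lambda>t. exp (\<i> * of_int j * complex_of_real t)) = (if j = 0 then 2 * pi else 0)"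
proof (cases "j = 0")
  case True then show ?thesis by (simp add: scaleR_conv_of_real)
next
  case False
  have "\<And>t. t \<in> {0..2*pi} \<Longrightarrow> ((\<lambda>x. exp ((\<i> * of_int j) * x) / (\<i> * of_int j)) has_vector_derivative exp ((\<i> * of_int j) * t)) (at t within {0..2*pi})"
    using False
    by (intro derivative_eq_intros has_complex_derivative_imp_has_vector_derivative [unfolded o_def] | simp)+
  then have "((\<lambda>t. exp((\<i> * of_int j) * of_real t)) has_integral exp((\<i> * of_int j) * complex_of_real (2*pi))/(\<i> * of_int j) - exp((\<i> * of_int j) * of_real 0)/(\<i> * of_int j))  {0..2*pi}"
    by (intro fundamental_theorem_of_calculus) auto
  moreover have "exp((\<i> * of_int j) * complex_of_real (2*pi)) = 1"
  proof -
    have "(\<i> * of_int j) * complex_of_real (2*pi) = (2 * of_int j * pi) * \<i>" by (simp add: algebra_simps)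
    then show ?thesis using exp_integer_2pi[of "of_int j"] by (simp add: mult_ac)
  qed
  ultimately show ?thesis using False by (simp add: integral_unique)
qed

lemma orth2:
  fixes j1 j2 :: int
  shows "integral (cbox (0,0) (2*pi,2*pi)) (\<lambda>x. exp (\<i> * of_int j1 * complex_of_real (fst x)) * exp (\<i> * of_int j2 * complex_of_real (snd x)))
     = (if j1 = 0 \<and> j2 = 0 then 4 * of_real (pi^2) else 0)"
proof -
  have "integral (cbox (0,0) (2*pi,2*pi)) (\<lambda>x. exp (\<i> * of_int j1 * complex_of_real (fst x)) * exp (\<i> * of_int j2 * complex_of_real (snd x)))
    = integral (cbox 0 (2*pi)) (\<lambda>x. integral (cbox 0 (2*pi)) (\<lambda>y. exp (\<i> * of_int j1 * complex_of_real x) * exp (\<i> * of_int j2 * complex_of_real y)))"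
    by (subst integral_prod_continuous) (auto intro!: continuous_intros)
  also have "\<dots> = integral {0..2*pi} (\<lambda>x. exp (\<i> * of_int j1 * complex_of_real x) * (if j2 = 0 then 2 * pi else 0))"
    by (simp add: orth1 del: of_real_mult)
  also have "\<dots> = (if j1 = 0 \<and> j2 = 0 then 4 * of_real (pi^2) else 0)"
    using orth1[of j1] by (auto simp: power2_eq_square)
  finally show ?thesis .
qed

lemma series_integral:
  fixes f :: "nat \<Rightarrow> real \<times> real \<Rightarrow> complex" and a b :: "real \<times> real"
  assumes S: "S = cbox a b"
  and cont: "\<And>m. continuous_on S (f m)"
  and sm: "\<And>x. x \<in> S \<Longrightarrow> (\<lambda>m. f m x) sums g x"
  and bd: "\<And>x M. x \<in> S \<Longrightarrow> norm (\<Sum>m<M. f m x) \<le> B"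
  shows "(\<lambda>m. integral S (f m)) sums integral S g"
proof -
  have int: "\<And>m. f m integrable_on S" using cont unfolding S by (rule integrable_continuous)
  have "(\<lambda>M. integral S (\<lambda>x. \<Sum>m<M. f m x)) \<longlonglongrightarrow> integral S g"
  proof (rule dominated_convergence(2)[where h = "\<lambda>x. B"])
    show "(\<lambda>x. \<Sum>m<k. f m x) integrable_on S" for k
      by (intro integrable_sum int) simp
    show "(\<lambda>x. B) integrable_on S" unfolding S by auto
    show "norm (\<Sum>m<k. f m x) \<le> B" if "x \<in> S" for k x using bd that .
    show "(\<lambda>k. \<Sum>m<k. f m x) \<longlonglongrightarrow> g x" if "x \<in> S" for x
      using sm[OF that] by (simp add: sums_def)
  qed
  moreover have "integral S (\<lambda>x. \<Sum>m<M. f m x) = (\<Sum>m<M. integral S (f m))" for M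
    by (rule integral_sum) (simp_all add: int)
  ultimately show ?thesis by (simp add: sums_def)
qed

lemma geom_bound:
  fixes z :: complex
  assumes "norm z \<le> q" "q < 1"
  shows "norm (\<Sum>m<M. z ^ m) \<le> 1 / (1 - q)"
proof -
  have q0: "0 \<le> q" using assms(1) norm_ge_zero order_trans by blast
  have "norm (\<Sum>m<M. z ^ m) \<le> (\<Sum>m<M. norm z ^ m)"
    by (rule order_trans[OF norm_sum]) (simp add: norm_power)
  also have "\<dots> \<le> (\<Sum>m<M. q ^ m)"
    by (intro sum_mono power_mono) (use assms in auto)
  also have "\<dots> = (1 - q ^ M) / (1 - q)" using assms by (simp add: sum_gp_strict)
  also have "\<dots> \<le> 1 / (1 - q)" using assms q0 by (simp add: divide_right_mono)
  finally show ?thesis .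
qed


lemma exp_nat_pow:
  fixes t :: real
  shows "exp (\<i> * of_nat n * complex_of_real t) = exp (\<i> * complex_of_real t) ^ n"
proof -
  have "\<i> * of_nat n * complex_of_real t = of_nat n * (\<i> * complex_of_real t)" by (simp add: mult_ac)
  then show ?thesis by (simp only: exp_of_nat_mult)
qed

lemma exp_int_powi:
  fixes j :: int and t :: real
  shows "exp (\<i> * of_int j * complex_of_real t) = exp (\<i> * complex_of_real t) powi j"
proof (cases j rule: int_cases)
  case (nonneg n)
  then show ?thesis using exp_nat_pow[of n t] by (simp add: power_int_of_nat)
next
  case (neg n)
  have "\<i> * of_int j * complex_of_real t = - (\<i> * of_nat (Suc n) * complex_of_real t)"
  proof -
    have "(of_int j :: complex) = - of_nat (Suc n)" using neg by simp
    then show ?thesis by (simp only: mult_minus_left mult_minus_right)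
  qed
  then have "exp (\<i> * of_int j * complex_of_real t) = inverse (exp (\<i> * complex_of_real t) ^ Suc n)"
    by (simp only: exp_minus exp_nat_pow)
  moreover have "j = - int (Suc n)" using neg by simp
  ultimately show ?thesis by (simp only: power_int_minus power_int_of_nat)
qed

lemma powi_combine:
  fixes x :: complex
  assumes "x \<noteq> 0"
  shows "x ^ a * inverse x ^ n * x powi (- k) = x powi (int a - int n - k)"
proof -
  have e: "int a - int n - k = int a + (- int n) + (- k)" by simp
  have "x powi (int a - int n - k) = x powi (int a) * x powi (- int n) * x powi (- k)"
    by (simp only: e power_int_add[OF disjI1[OF assms]])
  also have "\<dots> = x ^ a * inverse x ^ n * x powi (- k)"
    by (simp add: power_int_minus power_int_of_nat power_inverse)
  finally show ?thesis by simp
qed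

definition uu :: "real \<Rightarrow> real \<times> real \<Rightarrow> complex" where
  "uu r x = (exp (\<i> * complex_of_real (fst x)) + exp (\<i> * complex_of_real (snd x))) / complex_of_real r"

definition EE :: "int \<Rightarrow> int \<Rightarrow> real \<times> real \<Rightarrow> complex" where
  "EE k1 k2 x = exp (- \<i> * complex_of_real (of_int k1 * fst x + of_int k2 * snd x))"

definition TT :: "real \<Rightarrow> int \<Rightarrow> int \<Rightarrow> nat \<Rightarrow> nat \<Rightarrow> real \<times> real \<Rightarrow> complex" where
  "TT r k1 k2 m n x = uu r x ^ m * cnj (uu r x) ^ n * EE k1 k2 x"

lemma term_expand:
  assumes "r \<noteq> 0"
  shows "TT r k1 k2 m n x = (\<Sum>a\<le>m+n. complex_of_real (real (m+n choose a) / r^(m+n)) *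
     (exp (\<i> * of_int (int a - int n - k1) * complex_of_real (fst x)) *
      exp (\<i> * of_int (int m - int a - k2) * complex_of_real (snd x))))"
proof -
  define x1 where "x1 = exp (\<i> * complex_of_real (fst x))"
  define x2 where "x2 = exp (\<i> * complex_of_real (snd x))"
  have nz: "x1 \<noteq> 0" "x2 \<noteq> 0" by (simp_all add: x1_def x2_def)
  have c1: "cnj x1 = inverse x1" unfolding x1_def by (simp add: exp_cnj exp_minus[symmetric])
  have c2: "cnj x2 = inverse x2" unfolding x2_def by (simp add: exp_cnj exp_minus[symmetric])
  have E: "EE k1 k2 x = x1 powi (- k1) * x2 powi (- k2)"
  proof -
    have "- \<i> * complex_of_real (of_int k1 * fst x + of_int k2 * snd x) =
       \<i> * of_int (- k1) * complex_of_real (fst x) + \<i> * of_int (- k2) * complex_of_real (snd x)"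
      by (simp add: algebra_simps)
    then show ?thesis unfolding EE_def x1_def x2_def by (simp only: exp_add exp_int_powi)
  qed
  have U: "uu r x = (x1 + x2) / complex_of_real r" by (simp add: uu_def x1_def x2_def)
  have CU: "cnj (uu r x) = (x1 + x2) * inverse x1 * inverse x2 / complex_of_real r"
    using nz by (simp add: U c1 c2 field_simps)
  have "TT r k1 k2 m n x = (x1 + x2) ^ (m + n) / complex_of_real r ^ (m+n) * inverse x1 ^ n * inverse x2 ^ n
        * (x1 powi (- k1) * x2 powi (- k2))"
    unfolding TT_def E CU unfolding U by (simp add: power_mult_distrib power_divide power_add field_simps)
  also have "\<dots> = (\<Sum>a\<le>m+n. of_nat (m+n choose a) * x1 ^ a * x2 ^ (m + n - a)) / complex_of_real r ^ (m+n) * inverse x1 ^ n * inverse x2 ^ n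
        * (x1 powi (- k1) * x2 powi (- k2))"
    by (simp only: binomial_ring)
  also have "\<dots> = (\<Sum>a\<le>m+n. complex_of_real (real (m+n choose a) / r^(m+n)) *
     ((x1 ^ a * inverse x1 ^ n * x1 powi (- k1)) * (x2 ^ (m + n - a) * inverse x2 ^ n * x2 powi (- k2))))"
    by (simp add: sum_distrib_left sum_distrib_right sum_divide_distrib mult_ac)
  also have "\<dots> = (\<Sum>a\<le>m+n. complex_of_real (real (m+n choose a) / r^(m+n)) *
     (x1 powi (int a - int n - k1) * x2 powi (int m - int a - k2)))"
  proof (rule sum.cong[OF refl])
    fix a assume "a \<in> {..m+n}"
    then have "int (m + n - a) - int n - k2 = int m - int a - k2" by simp
    then show "complex_of_real (real (m+n choose a) / r^(m+n)) *
     ((x1 ^ a * inverse x1 ^ n * x1 powi (- k1)) * (x2 ^ (m + n - a) * inverse x2 ^ n * x2 powi (- k2))) =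
     complex_of_real (real (m+n choose a) / r^(m+n)) *
     (x1 powi (int a - int n - k1) * x2 powi (int m - int a - k2))"
      using powi_combine[OF nz(1), of a n k1] powi_combine[OF nz(2), of "m+n-a" n k2] by simp
  qed
  finally show ?thesis by (simp only: x1_def x2_def exp_int_powi)
qed

definition WW :: "real \<Rightarrow> int \<Rightarrow> nat \<Rightarrow> nat \<Rightarrow> real" where
  "WW r k1 m n = (if 0 \<le> int n + k1 \<and> int n + k1 \<le> int m + int n
      then real (m+n choose nat (int n + k1)) / r^(m+n) else 0)"

lemma int_TT:
  assumes "r \<noteq> 0"
  shows "integral (cbox (0,0) (2*pi,2*pi)) (TT r k1 k2 m n) =
     4 * complex_of_real (pi^2) * complex_of_real (if int m - int n = k1 + k2 then WW r k1 m n else 0)"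
proof -
  define c where "c a = complex_of_real (real (m+n choose a) / r^(m+n))" for a
  define P where "P = 4 * complex_of_real (pi^2)"
  have "integral (cbox (0,0) (2*pi,2*pi)) (TT r k1 k2 m n) =
    integral (cbox (0,0) (2*pi,2*pi)) (\<lambda>x. \<Sum>a\<le>m+n. c a *
     (exp (\<i> * of_int (int a - int n - k1) * complex_of_real (fst x)) *
      exp (\<i> * of_int (int m - int a - k2) * complex_of_real (snd x))))"
    unfolding c_def by (rule arg_cong[where f="integral _"], rule ext, rule term_expand[OF assms])
  also have "\<dots> = (\<Sum>a\<le>m+n. integral (cbox (0,0) (2*pi,2*pi)) (\<lambda>x. c a *
     (exp (\<i> * of_int (int a - int n - k1) * complex_of_real (fst x)) *
      exp (\<i> * of_int (int m - int a - k2) * complex_of_real (snd x)))))"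
    by (rule integral_sum) (auto intro!: integrable_continuous continuous_intros)
  also have "\<dots> = (\<Sum>a\<le>m+n. c a * (if int a - int n - k1 = 0 \<and> int m - int a - k2 = 0 then P else 0))"
    by (simp only: integral_mult_right orth2 P_def)
  also have "\<dots> = (\<Sum>a\<le>m+n. if a = nat (int n + k1) then
      (if 0 \<le> int n + k1 \<and> int m - int n = k1 + k2 then c a * P else 0) else 0)"
  proof (rule sum.cong[OF refl])
    fix a
    show "c a * (if int a - int n - k1 = 0 \<and> int m - int a - k2 = 0 then P else 0) = (if a = nat (int n + k1) then
      (if 0 \<le> int n + k1 \<and> int m - int n = k1 + k2 then c a * P else 0) else 0)"
    proof (cases "int a = int n + k1")
      case True
      then show ?thesis by simp
    next
      case False
      then have "a \<noteq> nat (int n + k1) \<or> \<not> 0 \<le> int n + k1" by linarith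
      then show ?thesis using False by auto
    qed
  qed
  also have "\<dots> = (if nat (int n + k1) \<in> {..m+n} then
      (if 0 \<le> int n + k1 \<and> int m - int n = k1 + k2 then c (nat (int n + k1)) * P else 0) else 0)"
    by (rule sum.delta) simp
  also have "\<dots> = P * complex_of_real (if int m - int n = k1 + k2 then WW r k1 m n else 0)"
    by (cases "0 \<le> int n + k1"; cases "int m - int n = k1 + k2"; simp add: WW_def c_def nat_le_iff mult.commute)
  finally show ?thesis by (simp add: P_def)
qed

lemma uu_bound:
  assumes "r > 0"
  shows "norm (uu r x) \<le> 2 / r"
proof -
  have "norm (exp (\<i> * complex_of_real (fst x)) + exp (\<i> * complex_of_real (snd x))) \<le> 2"
    by (rule order_trans[OF norm_triangle_ineq]) simp
  then show ?thesis using assms by (simp add: uu_def norm_divide divide_right_mono)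
qed

lemma norm_EE: "norm (EE k1 k2 x) = 1"
  by (simp add: EE_def norm_exp_eq_Re)

lemma one_minus_bound:
  fixes w :: complex
  assumes "norm w \<le> q" "q < 1"
  shows "norm (1 / (1 - w)) \<le> 1 / (1 - q)" "1 - w \<noteq> 0"
proof -
  have "1 - q \<le> norm (1 - w)"
    using norm_triangle_ineq2[of 1 w] assms by simp
  moreover have "0 < 1 - q" using assms by simp
  ultimately show "norm (1 / (1 - w)) \<le> 1 / (1 - q)"
    by (simp add: norm_divide frac_le)
  show "1 - w \<noteq> 0" using \<open>1 - q \<le> norm (1 - w)\<close> \<open>0 < 1 - q\<close> by auto
qed

definition VV :: "real \<Rightarrow> int \<Rightarrow> int \<Rightarrow> nat \<Rightarrow> real" where
  "VV r k1 k2 m = (if int m \<ge> k1 + k2 then WW r k1 m (nat (int m - (k1 + k2))) else 0)"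

lemma coeff_series:
  assumes r: "r > 2"
  shows "(\<lambda>m. complex_of_real (VV r k1 k2 m)) sums fourier_coeff r k1 k2"
proof -
  define q where "q = 2 / r"
  have q: "q < 1" "0 \<le> q" using r by (auto simp: q_def)
  have ub: "norm (uu r x) \<le> q" for x using uu_bound[of r x] r by (simp add: q_def)
  have ubc: "norm (cnj (uu r x)) \<le> q" for x using ub by simp
  have nz1: "1 - uu r x \<noteq> 0" for x using one_minus_bound(2)[OF ub q(1)] .
  have nz2: "1 - cnj (uu r x) \<noteq> 0" for x using one_minus_bound(2)[OF ubc q(1)] .
  define S where "S = cbox (0::real,0::real) (2*pi,2*pi)"
  define H where "H m x = uu r x ^ m * (EE k1 k2 x / (1 - cnj (uu r x)))" for m x
  define G where "G x = (1 / (1 - uu r x)) * (EE k1 k2 x / (1 - cnj (uu r x)))" for x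
  have inner: "(\<lambda>n. integral S (TT r k1 k2 m n)) sums integral S (H m)" for m
  proof (rule series_integral[where B = "1 / (1 - q)", OF S_def])
    show "continuous_on S (TT r k1 k2 m n)" for n
      unfolding TT_def uu_def EE_def using r by (intro continuous_intros) auto
    show "(\<lambda>n. TT r k1 k2 m n x) sums H m x" for x
    proof -
      have "(\<lambda>n. cnj (uu r x) ^ n) sums (1 / (1 - cnj (uu r x)))"
        by (rule geometric_sums) (use ubc[of x] q in \<open>simp\<close>)
      from sums_mult[OF this, of "uu r x ^ m * EE k1 k2 x"]
      show ?thesis by (simp add: TT_def H_def mult_ac)
    qed
    show "norm (\<Sum>n<M. TT r k1 k2 m n x) \<le> 1 / (1 - q)" for x M
    proof -
      have "(\<Sum>n<M. TT r k1 k2 m n x) = (uu r x ^ m * EE k1 k2 x) * (\<Sum>n<M. cnj (uu r x) ^ n)"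
        by (simp add: TT_def sum_distrib_left mult_ac)
      also have "norm \<dots> \<le> 1 * (1 / (1 - q))"
        unfolding norm_mult
      proof (rule mult_mono)
        have "norm (uu r x) ^ m \<le> 1" using ub[of x] q by (intro power_le_one) auto
        then show "norm (uu r x ^ m) * norm (EE k1 k2 x) \<le> 1" by (simp add: norm_EE norm_power)
      qed (use geom_bound[OF ubc q(1)] in auto)
      finally show ?thesis by simp
    qed
  qed
  have outer: "(\<lambda>m. integral S (H m)) sums integral S G"
  proof (rule series_integral[where B = "(1 / (1 - q)) * (1 / (1 - q))", OF S_def])
    show "continuous_on S (H m)" for m
    proof -
      have cu: "continuous_on S (uu r)" unfolding uu_def using r by (intro continuous_intros) auto
      have ce: "continuous_on S (EE k1 k2)" unfolding EE_def by (intro continuous_intros)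
      show ?thesis unfolding H_def
        by (intro continuous_on_mult continuous_on_power continuous_on_divide continuous_on_diff
          continuous_on_const continuous_on_cnj cu ce) (use nz2 in auto)
    qed
    show "(\<lambda>m. H m x) sums G x" for x
    proof -
      have "(\<lambda>m. (uu r x) ^ m) sums (1 / (1 - uu r x))"
        by (rule geometric_sums) (use ub[of x] q in \<open>simp\<close>)
      from sums_mult2[OF this, of "EE k1 k2 x / (1 - cnj (uu r x))"]
      show ?thesis by (simp add: G_def H_def mult_ac)
    qed
    show "norm (\<Sum>m<M. H m x) \<le> (1 / (1 - q)) * (1 / (1 - q))" for x M
    proof -
      have "(\<Sum>m<M. H m x) = (\<Sum>m<M. uu r x ^ m) * (EE k1 k2 x / (1 - cnj (uu r x)))"
        unfolding H_def by (rule sum_distrib_right[symmetric])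
      also have "norm \<dots> \<le> (1 / (1 - q)) * (1 / (1 - q))"
        unfolding norm_mult
      proof (rule mult_mono)
        show "norm (EE k1 k2 x / (1 - cnj (uu r x))) \<le> 1 / (1 - q)"
          using one_minus_bound(1)[OF ubc q(1)] by (simp add: norm_divide norm_EE)
      qed (use geom_bound[OF ub q(1)] q in auto)
      finally show ?thesis .
    qed
  qed
  have Hval: "(\<lambda>n. integral S (TT r k1 k2 m n)) sums (4 * complex_of_real (pi^2) * complex_of_real (VV r k1 k2 m))" for m
  proof (cases "int m \<ge> k1 + k2")
    case True
    define n0 where "n0 = nat (int m - (k1 + k2))"
    have "(\<lambda>n. integral S (TT r k1 k2 m n)) = (\<lambda>n. if n = n0 then 4 * complex_of_real (pi^2) * complex_of_real (WW r k1 m n) else 0)"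
    proof (rule ext)
      fix n
      have e: "int m - int n = k1 + k2 \<longleftrightarrow> n = n0" using True by (auto simp: n0_def)
      have "r \<noteq> 0" using r by simp
      then show "integral S (TT r k1 k2 m n) = (if n = n0 then 4 * complex_of_real (pi^2) * complex_of_real (WW r k1 m n) else 0)"
        by (simp only: S_def int_TT[OF \<open>r \<noteq> 0\<close>] e) simp
    qed
    moreover have "VV r k1 k2 m = WW r k1 m n0" using True by (simp add: VV_def n0_def)
    ultimately show ?thesis using sums_single[of n0 "\<lambda>n. 4 * complex_of_real (pi^2) * complex_of_real (WW r k1 m n)"] by simp
  next
    case False
    have "(\<lambda>n. integral S (TT r k1 k2 m n)) = (\<lambda>n. 0)"
      using r False by (auto simp: S_def int_TT)
    moreover have "VV r k1 k2 m = 0" using False by (simp add: VV_def)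
    ultimately show ?thesis by simp
  qed
  have HH: "integral S (H m) = 4 * complex_of_real (pi^2) * complex_of_real (VV r k1 k2 m)" for m
    using sums_unique2[OF inner Hval] .
  have "(\<lambda>m. 4 * complex_of_real (pi^2) * complex_of_real (VV r k1 k2 m)) sums integral S G"
    using outer unfolding HH .
  then have "(\<lambda>m. (1 / (4 * complex_of_real (pi^2))) * (4 * complex_of_real (pi^2) * complex_of_real (VV r k1 k2 m))) sums ((1 / (4 * complex_of_real (pi^2))) * integral S G)"
    by (rule sums_mult)
  moreover have "(1 / (4 * complex_of_real (pi^2))) * (4 * complex_of_real (pi^2) * complex_of_real (VV r k1 k2 m)) = complex_of_real (VV r k1 k2 m)" for m
    by simp
  moreover have "fourier_coeff r k1 k2 = (1 / (4 * complex_of_real (pi^2))) * integral S G"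
  proof -
    have "(\<lambda>(t1 :: real, t2 :: real).
          exp (- \<i> * of_real (of_int k1 * t1 + of_int k2 * t2)) /
          of_real ((cmod (pz r (exp (\<i> * of_real t1)) (exp (\<i> * of_real t2)))) ^ 2)) = G"
    proof (rule ext, clarify)
      fix t1 t2 :: real
      have p: "pz r (exp (\<i> * of_real t1)) (exp (\<i> * of_real t2)) = 1 - uu r (t1, t2)"
        by (simp add: pz_def uu_def)
      show "exp (- \<i> * of_real (of_int k1 * t1 + of_int k2 * t2)) /
          of_real ((cmod (pz r (exp (\<i> * of_real t1)) (exp (\<i> * of_real t2)))) ^ 2) = G (t1, t2)"
        unfolding p complex_norm_square using nz1[of "(t1,t2)"] nz2[of "(t1,t2)"]
        by (simp add: G_def EE_def field_simps)
    qed
    then show ?thesis by (simp add: fourier_coeff_def S_def)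
  qed
  ultimately show ?thesis by simp
qed



lemma poch_nat_plus1: "pochhammer (real a + 1) n = fact (a + n) / fact a"
proof (induction n)
  case 0 then show ?case by simp
next
  case (Suc n)
  have "pochhammer (real a + 1) (Suc n) = fact (a + n) / fact a * (real a + 1 + real n)"
    by (simp add: pochhammer_Suc Suc)
  also have "\<dots> = fact (a + Suc n) / fact a" by (simp add: algebra_simps)
  finally show ?case .
qed

lemma hyp_term:
  fixes a b j :: nat
  shows "real (a + b + 2*j choose (j + a)) = real (a + b choose a) *
    (pochhammer 1 j * pochhammer (real (a+b)/2+1) j * pochhammer ((real (a+b)+1)/2) j /
      (pochhammer (real a+1) j * pochhammer (real b+1) j) * 4^j / fact j)"
proof -
  define s where "s = a + b"
  have D: "4^j * pochhammer (real s/2+1) j * pochhammer ((real s+1)/2) j = fact (s + 2*j) / fact s"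
  proof -
    have e1: "2 * ((real s + 1)/2) = real s + 1" by simp
    have e2: "(real s+1)/2 + 1/2 = real s/2 + 1" by (simp add: field_simps)
    have e3: "(of_nat (2^(2*j)) :: real) = 4^j" by (simp add: power_mult)
    have "pochhammer (real s + 1) (2*j) = 4^j * pochhammer ((real s+1)/2) j * pochhammer (real s/2 + 1) j"
      using pochhammer_double[of "(real s + 1)/2" j] by (simp only: e1 e2 e3)
    then show ?thesis using poch_nat_plus1[of s "2*j"] by (simp add: mult_ac)
  qed
  have b1: "real (s + 2*j choose (j + a)) = fact (s + 2*j) / (fact (j + a) * fact (j + b))"
  proof -
    have "s + 2*j - (j + a) = j + b" by (simp add: s_def)
    then show ?thesis by (subst binomial_fact) (auto simp: s_def)
  qed
  have b2: "real (s choose a) = fact s / (fact a * fact b)"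
    by (subst binomial_fact) (auto simp: s_def)
  have "real (s choose a) *
    (pochhammer 1 j * pochhammer (real s/2+1) j * pochhammer ((real s+1)/2) j /
      (pochhammer (real a+1) j * pochhammer (real b+1) j) * 4^j / fact j)
    = real (s choose a) * ((4^j * pochhammer (real s/2+1) j * pochhammer ((real s+1)/2) j) /
      (pochhammer (real a+1) j * pochhammer (real b+1) j))"
    by (simp add: pochhammer_fact[symmetric])
  also have "\<dots> = fact s / (fact a * fact b) * ((fact (s + 2*j) / fact s) /
      ((fact (a + j) / fact a) * (fact (b + j) / fact b)))"
    by (simp only: D b2 poch_nat_plus1)
  also have "\<dots> = fact (s + 2*j) / (fact (j + a) * fact (j + b))"
    by (simp add: field_simps add.commute)
  finally show ?thesis using b1 by (simp add: s_def)
qed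

lemma two_choose: "(2*j+2 choose (j+1)) = 2 * (2*j+1 choose j)"
proof -
  have "(Suc (2*j+1) choose Suc j) = (2*j+1 choose j) + (2*j+1 choose Suc j)"
    by (rule binomial_Suc_Suc)
  moreover have "(2*j+1 choose Suc j) = (2*j+1 choose (2*j+1 - Suc j))"
    by (rule binomial_symmetric) simp
  moreover have "2*j+1 - Suc j = j" by simp
  ultimately show ?thesis by simp
qed

lemma central_series:
  assumes "0 \<le> t" "t < 1/4"
  shows "(\<lambda>j. real (2*j choose j) * t^j) sums (1 / sqrt (1 - 4*t))"
proof -
  have "\<bar>-4*t\<bar> < 1" using assms by simp
  from gen_binomial_real[OF this, of "-1/2"]
  have *: "(\<lambda>n. (-1/2 gchoose n) * (-4*t)^n) sums (1 + -4*t) powr (-1/2)" .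
  have eq: "((-1/2::real) gchoose n) * (-4*t)^n = real (2*n choose n) * t^n" for n
  proof -
    have G: "((-1/2::real) gchoose n) = (-1)^n * pochhammer (1/2) n / fact n"
      by (simp add: gbinomial_pochhammer)
    moreover have "pochhammer (2 * (1/2::real)) (2*n) = of_nat (2^(2*n)) * pochhammer (1/2) n * pochhammer (1/2+1/2) n"
      by (rule pochhammer_double)
    then have "fact (2*n) = 4^n * pochhammer (1/2::real) n * fact n"
      by (simp add: pochhammer_fact power_mult)
    moreover have "real (2*n choose n) = fact (2*n) / (fact n * fact n)"
      by (subst binomial_fact) auto
    moreover have Pw: "(-4*t)^n = (-1)^n * 4^n * t^n"
    proof -
      have "-4*t = (-1) * 4 * t" by simp
      then show ?thesis by (simp only: power_mult_distrib)
    qed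
    ultimately have "((-1/2::real) gchoose n) * (-4*t)^n = ((-1)^n * (-1)^n) * (4^n * pochhammer (1/2) n / fact n) * t^n"
      unfolding G Pw by (simp add: algebra_simps)
    also have "\<dots> = real (2*n choose n) * t^n"
      using \<open>fact (2*n) = 4^n * pochhammer (1/2::real) n * fact n\<close> \<open>real (2*n choose n) = fact (2*n) / (fact n * fact n)\<close>
      by (simp add: minus_one_mult_self)
    finally show ?thesis .
  qed
  have pw: "(1 + -4*t) powr (-1/2) = 1 / sqrt (1 - 4*t)"
  proof -
    have "(1 + -4*t) powr (-1/2) = inverse ((1 - 4*t) powr (1/2))"
    proof -
      have a: "(-1/2::real) = -(1/2)" "1 + -4*t = 1 - 4*t" by simp_all
      show ?thesis by (simp only: a powr_minus)
    qed
    also have "\<dots> = 1 / sqrt (1 - 4*t)"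
    proof -
      have "(1-4*t) powr (1/2) = sqrt (1-4*t)" by (rule powr_half_sqrt) (use assms in simp)
      then show ?thesis by (simp only: inverse_eq_divide)
    qed
    finally show ?thesis .
  qed
  show ?thesis using * unfolding eq pw .
qed

lemma binom_series_summable:
  fixes t :: real
  assumes "0 \<le> t" "t < 1/4"
  shows "summable (\<lambda>j. real (2*j+s choose j) * t^j)"
proof (rule summable_comparison_test')
  show "summable (\<lambda>j. 2^s * (4*t)^j)"
    using assms by (intro summable_mult summable_geometric) auto
  fix j :: nat
  have "real (2*j+s choose j) \<le> 2^(2*j+s)"
    using binomial_le_pow2[of "2*j+s" j] by (metis of_nat_le_iff of_nat_numeral of_nat_power)
  then have "real (2*j+s choose j) * t^j \<le> 2^(2*j+s) * t^j"
    using assms by (intro mult_right_mono) auto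
  also have "\<dots> = 2^s * (4*t)^j" by (simp add: power_add power_mult power_mult_distrib)
  finally show "norm (real (2*j+s choose j) * t^j) \<le> 2^s * (4*t)^j" using assms by simp
qed

lemma gen_series:
  fixes t :: real
  assumes t: "0 < t" "t < 1/4"
  defines "w \<equiv> sqrt (1 - 4*t)"
  defines "C \<equiv> (1 - w) / (2*t)"
  shows "(\<lambda>j. real (2*j+s choose j) * t^j) sums (C^s / w)"
proof -
  define g where "g s = (\<Sum>j. real (2*j+s choose j) * t^j)" for s
  have gs: "(\<lambda>j. real (2*j+s choose j) * t^j) sums g s" for s
    unfolding g_def using binom_series_summable[of t s] t by (intro summable_sums) auto
  have w: "0 < w" "w^2 = 1 - 4*t" using t by (auto simp: w_def)
  have g0: "g 0 = 1 / w"
    using sums_unique2[OF gs[of 0]] central_series[of t] t by (simp add: w_def)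
  have g1: "g 1 = (1 / w - 1) / (2*t)"
  proof -
    have c: "(\<lambda>j. real (2*j choose j) * t^j) sums (1 / w)" using central_series[of t] t by (simp add: w_def)
    then have "(\<lambda>j. real (2*(Suc j) choose (Suc j)) * t^(Suc j)) sums (1 / w - 1)"
      by (subst sums_Suc_iff) simp
    then have "(\<lambda>j. (1 / (2*t)) * (real (2*(Suc j) choose (Suc j)) * t^(Suc j))) sums ((1 / (2*t)) * (1 / w - 1))"
      by (rule sums_mult)
    moreover have "(1 / (2*t)) * (real (2*(Suc j) choose (Suc j)) * t^(Suc j)) = real (2*j+1 choose j) * t^j" for j
    proof -
      have "real (2*(Suc j) choose (Suc j)) = 2 * real (2*j+1 choose j)"
        using two_choose[of j] by simp
      moreover have "(1 / (2*t)) * (2 * X * t^(Suc j)) = X * t^j" for X using t by simp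
      ultimately show ?thesis by metis
    qed
    ultimately have "(\<lambda>j. real (2*j+1 choose j) * t^j) sums ((1 / (2*t)) * (1 / w - 1))" by simp
    then show ?thesis using sums_unique2[OF gs[of 1]] by simp
  qed
  have rec: "g (s+1) = g s + t * g (s+2)" for s
  proof -
    have b0: "(\<lambda>j. real (2*(Suc j)+s choose (Suc j)) * t^(Suc j)) sums (g s - 1)"
      using gs[of s] by (subst sums_Suc_iff) simp
    have b2: "(\<lambda>j. t * (real (2*j+(s+2) choose j) * t^j)) sums (t * g (s+2))"
      by (rule sums_mult) (rule gs)
    have eq: "real (2*(Suc j)+(s+1) choose (Suc j)) * t^(Suc j) =
      t * (real (2*j+(s+2) choose j) * t^j) + real (2*(Suc j)+s choose (Suc j)) * t^(Suc j)" for j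
    proof -
      have "2*(Suc j)+(s+1) = Suc (2*j+(s+2))" by simp
      moreover have "(Suc (2*j+(s+2)) choose Suc j) = (2*j+(s+2) choose j) + (2*j+(s+2) choose Suc j)"
        by (rule binomial_Suc_Suc)
      moreover have "2*j+(s+2) = 2*(Suc j)+s" by simp
      ultimately have "(2*(Suc j)+(s+1) choose (Suc j)) = (2*j+(s+2) choose j) + (2*(Suc j)+s choose Suc j)"
        by metis
      then show ?thesis by (simp add: algebra_simps)
    qed
    have "(\<lambda>j. real (2*(Suc j)+(s+1) choose (Suc j)) * t^(Suc j)) sums (t * g (s+2) + (g s - 1))"
      unfolding eq by (intro sums_add b0 b2)
    then have "(\<lambda>j. real (2*j+(s+1) choose j) * t^j) sums (t * g (s+2) + (g s - 1) + 1)"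
      by (subst (asm) sums_Suc_iff) simp
    then show ?thesis using sums_unique2[OF gs[of "s+1"]] by simp
  qed
  have Crel: "C - 1 = t * C^2"
  proof -
    have "4*t*(C - 1) = 2*(1-w) - 4*t" using t by (simp add: C_def field_simps)
    also have "\<dots> = (1-w)^2" using w by (simp add: power2_eq_square algebra_simps)
    also have "\<dots> = 4*t*(t*C^2)" using t by (simp add: C_def power2_eq_square field_simps)
    finally show ?thesis using t by simp
  qed
  have "g s = C^s / w \<and> g (Suc s) = C^(Suc s) / w" for s
  proof (induction s)
    case 0
    have "(1 / w - 1) / (2*t) = C / w" using w t by (simp add: C_def field_simps)
    then show ?case using g0 g1 by simp
  next
    case (Suc s)
    have "g (s+2) = (g (s+1) - g s) / t" using rec[of s] t by (simp add: field_simps)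
    also have "\<dots> = C^s * (C - 1) / (w * t)" using Suc t w by (simp add: field_simps)
    also have "\<dots> = C^(Suc (Suc s)) / w" using t w by (simp add: Crel power2_eq_square field_simps)
    finally show ?case using Suc by simp
  qed
  then show ?thesis using gs[of s] by simp
qed



lemma VV_eval:
  assumes "int m \<ge> k1 + k2" "nat (int m - (k1 + k2)) = n" "0 \<le> int n + k1" "int n + k1 \<le> int m + int n"
   "nat (int n + k1) = c"
  shows "VV r k1 k2 m = real (m + n choose c) / r^(m+n)"
  using assms by (simp add: VV_def WW_def)

lemma VV_zero:
  assumes "int m \<ge> k1 + k2 \<Longrightarrow> \<not> (0 \<le> int (nat (int m - (k1 + k2))) + k1 \<and> int (nat (int m - (k1 + k2))) + k1 \<le> int m + int (nat (int m - (k1 + k2))))"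
  shows "VV r k1 k2 m = 0"
  using assms by (auto simp: VV_def WW_def)

lemma VV_case1:
  "VV r (int a) (- int b) (j + a) = real (a+b+2*j choose j) / r^(a+b+2*j)"
  "m < a \<Longrightarrow> VV r (int a) (- int b) m = 0"
proof -
  have "VV r (int a) (- int b) (j + a) = real ((j+a)+(j+b) choose (j+b+a)) / r^((j+a)+(j+b))"
    by (rule VV_eval) auto
  moreover have "(j+a)+(j+b) = a+b+2*j" by simp
  moreover have "(a+b+2*j choose (j+b+a)) = (a+b+2*j choose j)"
    using binomial_symmetric[of j "a+b+2*j"] by (simp add: algebra_simps)
  ultimately show "VV r (int a) (- int b) (j + a) = real (a+b+2*j choose j) / r^(a+b+2*j)"
    by simp
  show "m < a \<Longrightarrow> VV r (int a) (- int b) m = 0"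
    by (rule VV_zero) auto
qed

lemma VV_case2:
  "VV r (- int a) (int b) (j + b) = real (a+b+2*j choose j) / r^(a+b+2*j)"
  "m < b \<Longrightarrow> VV r (- int a) (int b) m = 0"
proof -
  have "VV r (- int a) (int b) (j + b) = real ((j+b)+(j+a) choose j) / r^((j+b)+(j+a))"
    by (rule VV_eval) auto
  moreover have "(j+b)+(j+a) = a+b+2*j" by simp
  ultimately show "VV r (- int a) (int b) (j + b) = real (a+b+2*j choose j) / r^(a+b+2*j)"
    by simp
  show "m < b \<Longrightarrow> VV r (- int a) (int b) m = 0"
    by (rule VV_zero) auto
qed

lemma VV_case3:
  "VV r (int a) (int b) (j + (a+b)) = real (a+b+2*j choose (j+a)) / r^(a+b+2*j)"
  "m < a + b \<Longrightarrow> VV r (int a) (int b) m = 0"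
proof -
  have "VV r (int a) (int b) (j + (a+b)) = real ((j+(a+b))+j choose (j+a)) / r^((j+(a+b))+j)"
    by (rule VV_eval) auto
  moreover have "(j+(a+b))+j = a+b+2*j" by simp
  ultimately show "VV r (int a) (int b) (j + (a+b)) = real (a+b+2*j choose (j+a)) / r^(a+b+2*j)"
    by simp
  show "m < a + b \<Longrightarrow> VV r (int a) (int b) m = 0"
    by (rule VV_zero) auto
qed

lemma VV_case4:
  "VV r (- int a) (- int b) j = real (a+b+2*j choose (j+a)) / r^(a+b+2*j)"
proof -
  have "VV r (- int a) (- int b) j = real (j+(j+a+b) choose (j+b)) / r^(j+(j+a+b))"
    by (rule VV_eval) auto
  moreover have "j+(j+a+b) = a+b+2*j" by simp
  moreover have "(a+b+2*j choose (j+b)) = (a+b+2*j choose (j+a))"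
    using binomial_symmetric[of "j+b" "a+b+2*j"] by (simp add: algebra_simps)
  ultimately show ?thesis by simp
qed

lemma sumA:
  assumes r: "r > 2"
  shows "(\<lambda>j. real (a+b+2*j choose j) / r^(a+b+2*j)) sums
     ((1 / sqrt (1 - 4 / r^2)) * (r / 2 - sqrt (r^2 / 4 - 1)) ^ (a+b))"
proof -
  define s where "s = a + b"
  define t where "t = 1 / r^2"
  have "(2::real)^2 < r^2" by (rule power_strict_mono) (use r in auto)
  then have r2: "r^2 > 4" by simp
  have "1/r^2 < 1/4" using r2 by (intro divide_strict_left_mono) auto
  moreover have "0 < t" using r by (simp add: t_def)
  ultimately have t: "0 < t" "t < 1/4" by (simp_all add: t_def)
  define w where "w = sqrt (1 - 4*t)"
  define C where "C = (1 - w) / (2*t)"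
  have g: "(\<lambda>j. real (2*j+s choose j) * t^j) sums (C^s / w)"
    using gen_series[OF t, of s] by (simp add: w_def C_def)
  have "(\<lambda>j. (1 / r^s) * (real (2*j+s choose j) * t^j)) sums ((1 / r^s) * (C^s / w))"
    by (rule sums_mult[OF g])
  moreover have "(1 / r^s) * (real (2*j+s choose j) * t^j) = real (a+b+2*j choose j) / r^(a+b+2*j)" for j
  proof -
    have "(1 / r^s) * (X * t^j) = X / r^(s+2*j)" for X
      using r by (simp add: t_def power_add power_mult field_simps power_one_over flip: power_mult power_mult_distrib)
    moreover have "2*j+s = a+b+2*j" "s + 2*j = a+b+2*j" by (simp_all add: s_def)
    ultimately show ?thesis by metis
  qed
  moreover have "(1 / r^s) * (C^s / w) = (1 / sqrt (1 - 4 / r^2)) * (r / 2 - sqrt (r^2 / 4 - 1)) ^ (a+b)"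
  proof -
    have w': "w = sqrt (1 - 4 / r^2)" by (simp add: w_def t_def)
    have "r^2 / 4 - 1 = (r/2)^2 * (1 - 4 / r^2)" using r by (simp add: field_simps power2_eq_square)
    then have "sqrt (r^2 / 4 - 1) = (r/2) * w" using r by (simp add: w' real_sqrt_mult)
    then have "r / 2 - sqrt (r^2 / 4 - 1) = C / r" using r by (simp add: C_def t_def field_simps power2_eq_square)
    then show ?thesis by (simp add: w' s_def power_divide)
  qed
  ultimately show ?thesis by simp
qed

lemma sumB:
  assumes r: "r > 2"
  shows "(\<lambda>j. real (a+b+2*j choose (j+a)) / r^(a+b+2*j)) sums
     (real (a+b choose a) / r^(a+b) * hyp3F2 1 ((real a + real b)/2+1) ((real a + real b + 1)/2) (real a+1) (real b+1) (4 / r^2))"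
proof -
  define f where "f j = real (a+b+2*j choose (j+a)) / r^(a+b+2*j)" for j
  define c where "c = real (a+b choose a) / r^(a+b)"
  define h where "h j = pochhammer 1 j * pochhammer ((real a + real b)/2+1) j * pochhammer ((real a + real b + 1)/2) j /
      (pochhammer (real a+1) j * pochhammer (real b+1) j) * (4 / r^2) ^ j / fact j" for j
  have c0: "c \<noteq> 0" using r by (simp add: c_def)
  have fh: "f j = c * h j" for j
  proof -
    have "f j = real (a+b choose a) *
      (pochhammer 1 j * pochhammer (real (a+b)/2+1) j * pochhammer ((real (a+b)+1)/2) j /
      (pochhammer (real a+1) j * pochhammer (real b+1) j) * 4^j / fact j) / r^(a+b+2*j)"
      unfolding f_def by (subst hyp_term) simp
    also have "\<dots> = c * h j"
    proof -
      have rr: "(r^j)^2 = (r^2)^j" by (simp add: power_mult[symmetric] mult.commute)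
      show ?thesis using r by (simp add: c_def h_def power_add power_mult power_divide field_simps rr)
    qed
    finally show ?thesis .
  qed
  have "summable f"
  proof (rule summable_comparison_test')
    show "summable (\<lambda>j. (2/r)^(a+b) * (4 / r^2)^j)"
    proof (intro summable_mult summable_geometric)
      have "(2::real)^2 < r^2" by (rule power_strict_mono) (use r in auto)
      then have "r^2 > 4" by simp
      then have "4 / r^2 < r^2 / r^2" by (intro divide_strict_right_mono) auto
      then show "norm (4 / r^2) < 1" using r by simp
    qed
    fix j :: nat
    have "real (a+b+2*j choose (j+a)) \<le> 2^(a+b+2*j)"
      using binomial_le_pow2[of "a+b+2*j" "j+a"] by (metis of_nat_le_iff of_nat_numeral of_nat_power)
    then have "f j \<le> 2^(a+b+2*j) / r^(a+b+2*j)"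
      using r unfolding f_def by (intro divide_right_mono) auto
    also have "\<dots> = (2/r)^(a+b) * (4 / r^2)^j"
      by (simp add: power_add power_mult power_divide power2_eq_square)
    finally show "norm (f j) \<le> (2/r)^(a+b) * (4 / r^2)^j" using r by (simp add: f_def)
  qed
  then have "f sums suminf f" by (rule summable_sums)
  then have "(\<lambda>j. (1/c) * f j) sums ((1/c) * suminf f)" by (rule sums_mult)
  moreover have "(1/c) * f j = h j" for j using c0 by (simp add: fh)
  ultimately have "h sums (suminf f / c)" by simp
  then have "hyp3F2 1 ((real a + real b)/2+1) ((real a + real b + 1)/2) (real a+1) (real b+1) (4 / r^2) = suminf f / c"
    unfolding hyp3F2_def h_def by (rule sums_unique[symmetric])
  then show ?thesis using \<open>f sums suminf f\<close> c0 by (simp add: f_def[symmetric] c_def[symmetric])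
qed

theorem theorem1:
  fixes r :: real and k1 k2 :: int
  assumes "r > 2"
  shows "(k1 * k2 \<le> 0 \<longrightarrow>
            fourier_coeff r k1 k2 =
              of_real ((1 / sqrt (1 - 4 / r ^ 2)) *
                       (r / 2 - sqrt (r ^ 2 / 4 - 1)) ^ nat (\<bar>k1\<bar> + \<bar>k2\<bar>)))
       \<and> (k1 * k2 > 0 \<longrightarrow>
            fourier_coeff r k1 k2 =
              of_real (real (nat (\<bar>k1\<bar> + \<bar>k2\<bar>) choose nat \<bar>k1\<bar>) /
                       r ^ nat (\<bar>k1\<bar> + \<bar>k2\<bar>) *
                       hyp3F2 1 (real_of_int (\<bar>k1\<bar> + \<bar>k2\<bar>) / 2 + 1)
                              ((real_of_int (\<bar>k1\<bar> + \<bar>k2\<bar>) + 1) / 2)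
                              (real_of_int \<bar>k1\<bar> + 1) (real_of_int \<bar>k2\<bar> + 1)
                              (4 / r ^ 2)))"
proof -
  have r: "r > 2" by fact
  have S: "(\<lambda>m. complex_of_real (VV r k1 k2 m)) sums fourier_coeff r k1 k2"
    by (rule coeff_series[OF r])
  have key: "fourier_coeff r k1 k2 = complex_of_real X" if "VV r k1 k2 sums X" for X
  proof -
    have "(\<lambda>m. complex_of_real (VV r k1 k2 m)) sums complex_of_real X"
      using that by (rule sums_of_real)
    then show ?thesis using S by (rule sums_unique2[symmetric])
  qed
  show ?thesis
  proof (intro conjI impI)
    assume "k1 * k2 \<le> 0"
    then have "(0 \<le> k1 \<and> k2 \<le> 0) \<or> (k1 \<le> 0 \<and> 0 \<le> k2)" by (auto simp: mult_le_0_iff)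
    then show "fourier_coeff r k1 k2 =
              of_real ((1 / sqrt (1 - 4 / r ^ 2)) *
                       (r / 2 - sqrt (r ^ 2 / 4 - 1)) ^ nat (\<bar>k1\<bar> + \<bar>k2\<bar>))"
    proof
      assume h: "0 \<le> k1 \<and> k2 \<le> 0"
      define a where "a = nat k1"
      define b where "b = nat (- k2)"
      have k: "k1 = int a" "k2 = - int b" using h by (auto simp: a_def b_def)
      have "(\<lambda>j. VV r k1 k2 (j + a)) sums ((1 / sqrt (1 - 4 / r^2)) * (r / 2 - sqrt (r^2 / 4 - 1)) ^ (a+b))"
        unfolding k VV_case1(1) by (rule sumA[OF r])
      then have "VV r k1 k2 sums ((1 / sqrt (1 - 4 / r^2)) * (r / 2 - sqrt (r^2 / 4 - 1)) ^ (a+b))"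
        by (subst (asm) sums_zero_iff_shift) (auto simp: k VV_case1(2))
      moreover have "nat (\<bar>k1\<bar> + \<bar>k2\<bar>) = a + b" by (simp add: k nat_add_distrib)
      ultimately show ?thesis using key by simp
    next
      assume h: "k1 \<le> 0 \<and> 0 \<le> k2"
      define a where "a = nat (- k1)"
      define b where "b = nat k2"
      have k: "k1 = - int a" "k2 = int b" using h by (auto simp: a_def b_def)
      have "(\<lambda>j. VV r k1 k2 (j + b)) sums ((1 / sqrt (1 - 4 / r^2)) * (r / 2 - sqrt (r^2 / 4 - 1)) ^ (a+b))"
        unfolding k VV_case2(1) by (rule sumA[OF r])
      then have "VV r k1 k2 sums ((1 / sqrt (1 - 4 / r^2)) * (r / 2 - sqrt (r^2 / 4 - 1)) ^ (a+b))"
        by (subst (asm) sums_zero_iff_shift) (auto simp: k VV_case2(2))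
      moreover have "nat (\<bar>k1\<bar> + \<bar>k2\<bar>) = a + b" by (simp add: k nat_add_distrib)
      ultimately show ?thesis using key by simp
    qed
  next
    assume "k1 * k2 > 0"
    then have "(0 < k1 \<and> 0 < k2) \<or> (k1 < 0 \<and> k2 < 0)" by (auto simp: zero_less_mult_iff)
    then show "fourier_coeff r k1 k2 =
              of_real (real (nat (\<bar>k1\<bar> + \<bar>k2\<bar>) choose nat \<bar>k1\<bar>) /
                       r ^ nat (\<bar>k1\<bar> + \<bar>k2\<bar>) *
                       hyp3F2 1 (real_of_int (\<bar>k1\<bar> + \<bar>k2\<bar>) / 2 + 1)
                              ((real_of_int (\<bar>k1\<bar> + \<bar>k2\<bar>) + 1) / 2)
                              (real_of_int \<bar>k1\<bar> + 1) (real_of_int \<bar>k2\<bar> + 1)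
                              (4 / r ^ 2))"
    proof
      assume h: "0 < k1 \<and> 0 < k2"
      define a where "a = nat k1"
      define b where "b = nat k2"
      have k: "k1 = int a" "k2 = int b" using h by (auto simp: a_def b_def)
      have "(\<lambda>j. VV r k1 k2 (j + (a+b))) sums
         (real (a+b choose a) / r^(a+b) * hyp3F2 1 ((real a + real b)/2+1) ((real a + real b + 1)/2) (real a+1) (real b+1) (4 / r^2))"
        unfolding k VV_case3(1) by (rule sumB[OF r])
      then have "VV r k1 k2 sums
         (real (a+b choose a) / r^(a+b) * hyp3F2 1 ((real a + real b)/2+1) ((real a + real b + 1)/2) (real a+1) (real b+1) (4 / r^2))"
        by (subst (asm) sums_zero_iff_shift) (auto simp: k VV_case3(2))
      moreover have "nat (\<bar>k1\<bar> + \<bar>k2\<bar>) = a + b" "nat \<bar>k1\<bar> = a" by (simp_all add: k nat_add_distrib)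
      moreover have "real_of_int (\<bar>k1\<bar> + \<bar>k2\<bar>) = real a + real b" "real_of_int \<bar>k1\<bar> = real a" "real_of_int \<bar>k2\<bar> = real b"
        by (simp_all add: k)
      ultimately show ?thesis using key by (simp add: add_divide_distrib)
    next
      assume h: "k1 < 0 \<and> k2 < 0"
      define a where "a = nat (- k1)"
      define b where "b = nat (- k2)"
      have k: "k1 = - int a" "k2 = - int b" using h by (auto simp: a_def b_def)
      have "VV r k1 k2 sums
         (real (a+b choose a) / r^(a+b) * hyp3F2 1 ((real a + real b)/2+1) ((real a + real b + 1)/2) (real a+1) (real b+1) (4 / r^2))"
        unfolding k VV_case4 by (rule sumB[OF r])
      moreover have "nat (\<bar>k1\<bar> + \<bar>k2\<bar>) = a + b" "nat \<bar>k1\<bar> = a" by (simp_all add: k nat_add_distrib)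
      moreover have "real_of_int (\<bar>k1\<bar> + \<bar>k2\<bar>) = real a + real b" "real_of_int \<bar>k1\<bar> = real a" "real_of_int \<bar>k2\<bar> = real b"
        by (simp_all add: k)
      ultimately show ?thesis using key by (simp add: add_divide_distrib)
    qed
  qed
qed

end
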